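(* Let $\mu(dx)=\frac{\mathbf 1_{(0,1)}(x)}{2\sqrt x}dx$ and $N\ge1$. Define $c_0=0$, $c_1=1$ and for $k\ge1$, $c_{k+1}=\frac{\sqrt{17c_k^2-4c_kc_{k-1}-4c_{k-1}^2}-c_k}{2}$. Then the (unique) quadratic optimal $N$-quantizer of $\mu$ is $\{x_1,\dots,x_N\}$ with $$x_k=\frac{c_k^2+c_kc_{k-1}+c_{k-1}^2}{3c_N^2},\quad k=1,\dots,N,$$ and the boundaries of its Voronoi cells are $x_{k+\frac12}=(c_k/c_N)^2$, $k=0,\dots,N$.
   Context: A quadratic optimal $N$-quantizer of a probability measure $\mu$ on $\mathbb R$ with finite second moment is a set $\Gamma$ of at most $N$ points minimizing $\int\mathrm{dist}(x,\Gamma)^2\mu(dx)$. For this $\mu$, such a quantizer is unique (known result); the Voronoi cell boundaries are the midpoints between consecutive points of the quantizer. *)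

theory Defs
  imports "HOL-Analysis.Analysis"
begin

definition qmu :: "real measure" where
  "qmu = density lborel (\<lambda>x. ennreal (indicator {0<..<1} x / (2 * sqrt x)))"

definition distortion :: "real set \<Rightarrow> ennreal" where
  "distortion \<Gamma> = (\<integral>\<^sup>+ x. ennreal ((infdist x \<Gamma>)\<^sup>2) \<partial>qmu)"

definition grid :: "nat \<Rightarrow> real set \<Rightarrow> bool" where
  "grid N \<Gamma> \<longleftrightarrow> finite \<Gamma> \<and> \<Gamma> \<noteq> {} \<and> card \<Gamma> \<le> N"

definition optimal_quantizer :: "nat \<Rightarrow> real set \<Rightarrow> bool" where
  "optimal_quantizer N \<Gamma> \<longleftrightarrow> grid N \<Gamma> \<and> (\<forall>\<Gamma>'. grid N \<Gamma>' \<longrightarrow> distortion \<Gamma> \<le> distortion \<Gamma>')"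

fun cseq :: "nat \<Rightarrow> real" where
  "cseq 0 = 0"
| "cseq (Suc 0) = 1"
| "cseq (Suc (Suc k)) =
     (sqrt (17 * (cseq (Suc k))\<^sup>2 - 4 * cseq (Suc k) * cseq k - 4 * (cseq k)\<^sup>2) - cseq (Suc k)) / 2"

end

theory Submission
  imports Defs
begin


lemma cseq_basic: "0 \<le> cseq k \<and> cseq k < cseq (Suc k)"
proof (induction k)
  case 0
  then show ?case by simp
next
  case (Suc j)
  define a where "a = cseq (Suc j)"
  define d where "d = cseq j"
  have d0: "0 \<le> d" "d < a" using Suc unfolding a_def d_def by auto
  have "(3*a)\<^sup>2 < 17 * a\<^sup>2 - 4 * a * d - 4 * d\<^sup>2"
  proof -
    have "a * d < a * a" using d0 by (intro mult_strict_left_mono) auto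
    moreover have "d * d < a * a" using d0 by (intro mult_strict_mono) auto
    ultimately show ?thesis by (simp add: power2_eq_square)
  qed
  then have "3*a < sqrt (17 * a\<^sup>2 - 4 * a * d - 4 * d\<^sup>2)" by (rule real_less_rsqrt)
  then have "a < cseq (Suc (Suc j))" by (simp add: a_def[symmetric] d_def[symmetric])
  then show ?case using d0 a_def by simp
qed

lemma cseq_nonneg: "0 \<le> cseq k" using cseq_basic by blast
lemma cseq_less: "cseq k < cseq (Suc k)" using cseq_basic by blast
lemma cseq_pos: "k \<ge> 1 \<Longrightarrow> 0 < cseq k"
  using cseq_basic[of "k-1"] by (cases k) auto
lemma cseq_mono_le: "cseq (k - 1) \<le> cseq k"
  using cseq_less[of "k-1"] by (cases k) auto

lemma cseq_rec: "(cseq (Suc (Suc j)))\<^sup>2 + cseq (Suc j) * cseq (Suc (Suc j))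
     = 4 * (cseq (Suc j))\<^sup>2 - cseq (Suc j) * cseq j - (cseq j)\<^sup>2"
proof -
  define a where "a = cseq (Suc j)"
  define d where "d = cseq j"
  define b where "b = cseq (Suc (Suc j))"
  have d0: "0 \<le> d" "d < a" using cseq_basic[of j] cseq_basic[of "Suc j"] unfolding a_def d_def by auto
  have pos: "0 \<le> 17 * a\<^sup>2 - 4 * a * d - 4 * d\<^sup>2"
  proof -
    have "a * d \<le> a * a" using d0 by (intro mult_left_mono) auto
    moreover have "d * d \<le> a * a" using d0 by (intro mult_mono) auto
    ultimately show ?thesis using mult_nonneg_nonneg[of a a] d0 unfolding power2_eq_square mult.assoc by linarith
  qed
  have "2*b + a = sqrt (17 * a\<^sup>2 - 4 * a * d - 4 * d\<^sup>2)"
    by (simp add: a_def b_def d_def field_simps)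
  then have "(2*b+a)\<^sup>2 = 17 * a\<^sup>2 - 4 * a * d - 4 * d\<^sup>2" using pos by simp
  then have "b\<^sup>2 + a*b = 4*a\<^sup>2 - a*d - d\<^sup>2" by (simp add: power2_eq_square algebra_simps)
  then show ?thesis by (simp add: a_def b_def d_def)
qed

lemma Tpos:
  fixes x q :: real
  assumes "0 < x" "x < 1" "0 < q" "q < 1"
  shows "0 < q^3 + x * q^2 + 2 * x * q^3 + x^2 * q + 2 * x^2 * q^2 - 3 * x^2 * q^3 + x^3 + 2 * x^3 * q - 3 * x^3 * q^2 - 4 * x^3 * q^3"
proof -
  have le1: "y * m \<le> m" if "0 \<le> m" "y \<le> 1" for m y :: real
    using mult_right_mono[of y 1 m] that by simp
  have h1: "q * q \<le> 1" "x * q \<le> 1" "x * x \<le> 1" using assms by (auto intro: mult_le_one)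
  have h2: "q * (q * q) \<le> 1" "x * (x * q) \<le> 1" "x * (q * q) \<le> 1" "x * (x * x) \<le> 1"
    using assms h1 by (auto intro: mult_le_one)
  have a1: "x^2 * q^3 \<le> x * q^3" using le1[of "x * q^3" x] assms by (simp add: power2_eq_square power3_eq_cube algebra_simps h1 h2)
  have a2: "x^2 * q^3 \<le> x^2 * q" using le1[of "x^2 * q" "q^2"] assms by (simp add: power2_eq_square power3_eq_cube algebra_simps h1 h2)
  have a3: "x^3 * q^2 \<le> x^3 * q" using le1[of "x^3 * q" q] assms by (simp add: power2_eq_square power3_eq_cube algebra_simps h1 h2)
  have a4: "x^3 * q^2 \<le> x^2 * q^2" using le1[of "x^2 * q^2" x] assms by (simp add: power2_eq_square power3_eq_cube algebra_simps h1 h2)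
  have a5: "x^3 * q^3 \<le> x^3" using le1[of "x^3" "q^3"] assms by (simp add: power_le_one power2_eq_square power3_eq_cube algebra_simps h1 h2)
  have a6: "x^3 * q^3 \<le> x * q^2" using le1[of "x * q^2" "x^2 * q"] assms
    by (simp add: power2_eq_square power3_eq_cube algebra_simps mult_le_one)
  have a7: "x^3 * q^3 \<le> x^2 * q^2" using le1[of "x^2 * q^2" "x * q"] assms
    by (simp add: power2_eq_square power3_eq_cube algebra_simps mult_le_one)
  have a8: "x^3 * q^3 < q^3" using assms
    by (simp add: power_strict_mono mult_less_cancel_right1 power_less_one_iff)
  show ?thesis using a1 a2 a3 a4 a5 a6 a7 a8 by linarith
qed

definition Hf :: "real \<Rightarrow> real \<Rightarrow> real" where
  "Hf A t = A * t^5 + 4 - 5 * t - 5 * t^2 + 5 * t^3 + 5 * t^4"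

lemma Hf_deriv: "((Hf A) has_real_derivative (5 * A * t^4 - 5 - 10 * t + 15 * t^2 + 20 * t^3)) (at t)"
  unfolding Hf_def by (auto intro!: derivative_eq_intros simp: algebra_simps)

lemma Hf_strict:
  fixes A q t :: real
  assumes q: "0 < q" "q < 1" and A: "A * q^4 = 1 + 2 * q - 3 * q^2 - 4 * q^3"
    and t: "0 \<le> t" "t \<le> 1" "t \<noteq> q"
  shows "Hf A q < Hf A t"
proof -
  define T where "T x = q^3 + x * q^2 + 2 * x * q^3 + x^2 * q + 2 * x^2 * q^2 - 3 * x^2 * q^3 + x^3 + 2 * x^3 * q - 3 * x^3 * q^2 - 4 * x^3 * q^3" for x
  define D where "D x = 5 * A * x^4 - 5 - 10 * x + 15 * x^2 + 20 * x^3" for x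
  have key: "q^4 * D x = 5 * (x - q) * T x" for x
  proof -
    have "q^4 * D x = 5 * x^4 * (A * q^4) + q^4 * (- 5 - 10 * x + 15 * x^2 + 20 * x^3)"
      unfolding D_def by (simp add: algebra_simps)
    also have "\<dots> = 5 * (x - q) * T x" unfolding A T_def by (simp add: algebra_simps power2_eq_square power3_eq_cube power4_eq_xxxx)
    finally show ?thesis .
  qed
  have q4: "0 < q^4" using q by simp
  have Dpos: "0 < D x" if "q < x" "x < 1" for x
  proof -
    have "0 < T x" unfolding T_def using Tpos[of x q] that q by simp
    then have "0 < q^4 * D x" using key that by simp
    then show ?thesis using q4 by (simp add: zero_less_mult_iff)
  qed
  have Dneg: "D x < 0" if "0 < x" "x < q" for x
  proof -
    have "0 < T x" unfolding T_def using Tpos[of x q] that q by simp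
    then have "q^4 * D x < 0" using key that by (simp add: mult_less_0_iff)
    then show ?thesis using q4 by (simp add: mult_less_0_iff)
  qed
  have der: "(Hf A has_real_derivative D x) (at x)" for x unfolding D_def by (rule Hf_deriv)
  show ?thesis
  proof (cases "q < t")
    case True
    obtain z where z: "q < z" "z < t" "Hf A t - Hf A q = (t - q) * D z"
      using MVT2[of q t "Hf A" D] der True by blast
    have "0 < D z" using Dpos z t by simp
    then have "0 < (t - q) * D z" using True by simp
    then show ?thesis using z by simp
  next
    case False
    then have tq: "t < q" using t by simp
    obtain z where z: "t < z" "z < q" "Hf A q - Hf A t = (q - t) * D z"
      using MVT2[of t q "Hf A" D] der tq by blast
    have "D z < 0" using Dneg z t by simp
    then have "(q - t) * D z < 0" using tq by (simp add: mult_pos_neg)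
    then show ?thesis using z by simp
  qed
qed

definition Wd :: "nat \<Rightarrow> real" where
  "Wd n = (4 - (4 * (cseq n)^2 - cseq n * cseq (n - 1) - (cseq (n - 1))^2)
              * (cseq n * cseq (n - 1) + (cseq (n - 1))^2) / (cseq n)^4) / 45"

definition Qf :: "real \<Rightarrow> real \<Rightarrow> real" where
  "Qf t s = (s^5 - t^5) / 5 - (s - t) * (s^2 + s * t + t^2)^2 / 9"

lemma alg_A:
  fixes a b d :: real
  assumes a: "0 < a" and b: "0 < b" and r: "b^2 + a * b = 4 * a^2 - a * d - d^2"
  shows "(- (4 * a^2 - a * d - d^2) * (a * d + d^2) / a^4) * (a / b)^4
     = 1 + 2 * (a / b) - 3 * (a / b)^2 - 4 * (a / b)^3"
proof -
  have e1: "4 * a^2 - a * d - d^2 = b^2 + a * b" using r by simp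
  have e2: "a * d + d^2 = 4 * a^2 - b^2 - a * b" using r by simp
  show ?thesis unfolding e1 e2 using a b
    by (simp add: field_simps power2_eq_square power3_eq_cube power4_eq_xxxx)
qed

lemma Wd_step:
  fixes n :: nat and t s :: real
  assumes n: "n \<ge> 1" and t: "0 \<le> t" "t \<le> s" and s: "0 < s"
  shows "Wd (Suc n) * s^5 \<le> Wd n * t^5 + Qf t s"
    and "t \<noteq> cseq n / cseq (Suc n) * s \<Longrightarrow> Wd (Suc n) * s^5 < Wd n * t^5 + Qf t s"
    and "t = cseq n / cseq (Suc n) * s \<Longrightarrow> Wd (Suc n) * s^5 = Wd n * t^5 + Qf t s"
proof -
  define a where "a = cseq n"
  define b where "b = cseq (Suc n)"
  define d where "d = cseq (n - 1)"
  define q where "q = a / b"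
  define A where "A = 45 * Wd n - 4"
  have a: "0 < a" using cseq_pos[OF n] a_def by simp
  have ab: "a < b" using cseq_less[of n] a_def b_def by simp
  have b: "0 < b" using a ab by simp
  have r: "b^2 + a * b = 4 * a^2 - a * d - d^2"
    using cseq_rec[of "n - 1"] n unfolding a_def b_def d_def by (cases n) auto
  have q: "0 < q" "q < 1" unfolding q_def using a b ab by auto
  have A_eq: "A = - (4 * a^2 - a * d - d^2) * (a * d + d^2) / a^4"
    unfolding A_def Wd_def a_def[symmetric] d_def[symmetric] using a by (simp add: field_simps)
  have Aq: "A * q^4 = 1 + 2 * q - 3 * q^2 - 4 * q^3"
    unfolding A_eq q_def using alg_A[OF a b r] .
  have Wn1: "45 * Wd (Suc n) = Hf A q"
  proof -
    have "45 * Wd (Suc n) = 4 - (4 * b^2 - b * a - a^2) * (b * a + a^2) / b^4"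
      unfolding Wd_def a_def b_def by simp
    also have "\<dots> = 4 - 4 * q - 3 * q^2 + 2 * q^3 + q^4"
      unfolding q_def using b by (simp add: field_simps power2_eq_square power3_eq_cube power4_eq_xxxx)
    also have "\<dots> = Hf A q"
    proof -
      have "Hf A q = q * (A * q^4) + 4 - 5 * q - 5 * q^2 + 5 * q^3 + 5 * q^4"
        unfolding Hf_def by (simp add: algebra_simps eval_nat_numeral)
      then show ?thesis unfolding Aq by (simp add: algebra_simps power4_eq_xxxx power2_eq_square power3_eq_cube)
    qed
    finally show ?thesis .
  qed
  define u where "u = t / s"
  have u: "0 \<le> u" "u \<le> 1" unfolding u_def using t s by auto
  have tu: "t = u * s" unfolding u_def using s by simp
  have main: "45 * (Wd n * t^5 + Qf t s) = s^5 * Hf A u"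
    unfolding tu Qf_def Hf_def A_def by (simp add: field_simps eval_nat_numeral)
  have s5: "0 < s^5" using s by simp
  have m2: "45 * (Wd (Suc n) * s^5) = s^5 * Hf A q" using Wn1 by (simp add: algebra_simps)
  have le: "Hf A q \<le> Hf A u"
    using Hf_strict[OF q Aq u] by (cases "u = q") auto
  show "Wd (Suc n) * s^5 \<le> Wd n * t^5 + Qf t s"
  proof -
    have "s^5 * Hf A q \<le> s^5 * Hf A u" using le s5 by simp
    then show ?thesis using main m2 by argo
  qed
  show "t = cseq n / cseq (Suc n) * s \<Longrightarrow> Wd (Suc n) * s^5 = Wd n * t^5 + Qf t s"
  proof -
    assume "t = cseq n / cseq (Suc n) * s"
    then have "u = q" unfolding u_def q_def a_def b_def using s by auto
    then have hq: "Hf A u = Hf A q" by simp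
    have "45 * (Wd n * t^5 + Qf t s) = 45 * (Wd (Suc n) * s^5)" by (simp only: main m2 hq)
    then show ?thesis by simp
  qed
  assume "t \<noteq> cseq n / cseq (Suc n) * s"
  then have "u \<noteq> q" unfolding tu q_def a_def b_def by auto
  then have "Hf A q < Hf A u" using Hf_strict[OF q Aq u] by auto
  then have "s^5 * Hf A q < s^5 * Hf A u" using s5 by simp
  then show "Wd (Suc n) * s^5 < Wd n * t^5 + Qf t s" using main m2 by argo
qed

definition FF :: "real set \<Rightarrow> real \<Rightarrow> real" where
  "FF G s = integral {0..s} (\<lambda>u. (infdist (u^2) G)^2)"

lemma cont_fd: "continuous_on S (\<lambda>u::real. (infdist (u^2) G)^2)"
  by (intro continuous_intros)

lemma integrable_fd: "(\<lambda>u::real. (infdist (u^2) G)^2) integrable_on {a..b}"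
  by (rule integrable_continuous_interval[OF cont_fd])

lemma poly_int:
  fixes t s y :: real
  assumes "t \<le> s"
  shows "((\<lambda>u. (u^2 - y)^2) has_integral (Qf t s + (s - t) * (y - (s^2 + s * t + t^2) / 3)^2)) {t..s}"
proof -
  define P where "P u = u^5 / 5 - 2 * y * u^3 / 3 + y^2 * u" for u :: real
  have d: "(P has_vector_derivative (x^2 - y)^2) (at x within {t..s})" for x
  proof -
    have "(P has_real_derivative (x^2 - y)^2) (at x)"
      unfolding P_def by (auto intro!: derivative_eq_intros simp: algebra_simps power2_eq_square eval_nat_numeral)
    then show ?thesis
      by (simp add: has_real_derivative_iff_has_vector_derivative has_vector_derivative_at_within)
  qed
  have "((\<lambda>u. (u^2 - y)^2) has_integral (P s - P t)) {t..s}"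
    using fundamental_theorem_of_calculus[OF assms d] by simp
  moreover have "P s - P t = Qf t s + (s - t) * (y - (s^2 + s * t + t^2) / 3)^2"
    unfolding P_def Qf_def by (simp add: field_simps eval_nat_numeral)
  ultimately show ?thesis by simp
qed

lemma int_single: "t \<le> s \<Longrightarrow> integral {t..s} (\<lambda>u. (infdist (u^2) {y})^2)
   = Qf t s + (s - t) * (y - (s^2 + s * t + t^2) / 3)^2"
  using poly_int[of t s y] by (simp add: dist_real_def integral_unique)

lemma infdist_low:
  fixes x y :: real
  assumes fin: "finite G" and ne: "G \<noteq> {}" and gy: "\<forall>w\<in>G. w < y"
    and x: "x \<le> (y + Max G) / 2"
  shows "infdist x (insert y G) = infdist x G"
proof (rule antisym)
  show "infdist x (insert y G) \<le> infdist x G" by (rule infdist_mono) (use ne in auto)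
  have cl: "closed (insert y G)" using fin by (simp add: finite_imp_closed)
  obtain a where a: "a \<in> insert y G" "infdist x (insert y G) = dist x a"
    using infdist_attains_inf[OF cl] by blast
  show "infdist x G \<le> infdist x (insert y G)"
  proof (cases "a \<in> G")
    case True
    then show ?thesis using a infdist_le by metis
  next
    case False
    then have ay: "a = y" using a by auto
    have zG: "Max G \<in> G" using fin ne by simp
    then have zy: "Max G < y" using gy by auto
    have "dist x (Max G) \<le> dist x y" using x zy by (simp add: dist_real_def)
    moreover have "infdist x (insert y G) = dist x y" using a ay by simp
    ultimately show ?thesis using infdist_le[OF zG, of x] by linarith
  qed
qed

lemma infdist_high:
  fixes x y :: real
  assumes fin: "finite G" and ne: "G \<noteq> {}" and gy: "\<forall>w\<in>G. w < y"
    and x: "(y + Max G) / 2 \<le> x"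
  shows "infdist x (insert y G) = dist x y"
proof (rule antisym)
  show "infdist x (insert y G) \<le> dist x y" by (rule infdist_le) simp
  have cl: "closed (insert y G)" using fin by (simp add: finite_imp_closed)
  obtain a where a: "a \<in> insert y G" "infdist x (insert y G) = dist x a"
    using infdist_attains_inf[OF cl] by blast
  show "dist x y \<le> infdist x (insert y G)"
  proof (cases "a \<in> G")
    case True
    have "a \<le> Max G" using fin True by simp
    then have "dist x y \<le> dist x a" using x gy True by (auto simp: dist_real_def)
    then show ?thesis using a by simp
  next
    case False
    then show ?thesis using a by auto
  qed
qed

lemma FF_split:
  fixes y s :: real
  assumes fin: "finite G" and ne: "G \<noteq> {}" and gy: "\<forall>w\<in>G. w < y" and s: "0 \<le> s"
    and b: "b = (y + Max G) / 2" and t: "t = (if b \<le> 0 then 0 else min s (sqrt b))"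
  shows "0 \<le> t" "t \<le> s"
    "FF (insert y G) s = FF G t + integral {t..s} (\<lambda>u. (infdist (u^2) {y})^2)"
proof -
  show t0: "0 \<le> t" using t s by auto
  show ts: "t \<le> s" using t s by auto
  have "FF (insert y G) s = integral {0..t} (\<lambda>u. (infdist (u^2) (insert y G))^2)
      + integral {t..s} (\<lambda>u. (infdist (u^2) (insert y G))^2)"
    unfolding FF_def using Henstock_Kurzweil_Integration.integral_combine[OF t0 ts integrable_fd] by simp
  also have "integral {0..t} (\<lambda>u. (infdist (u^2) (insert y G))^2) = FF G t"
    unfolding FF_def
  proof (rule integral_spike[of "{0}"])
    show "negligible {0::real}" by simp
    fix u assume u: "u \<in> {0..t} - {0}"
    then have "0 < u" "u \<le> t" by auto
    then have bp: "\<not> b \<le> 0" and "u \<le> sqrt b" using t by (auto split: if_splits)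
    then have "u^2 \<le> (sqrt b)^2" using \<open>0 < u\<close> by (intro power_mono) auto
    then have "u^2 \<le> b" using bp by simp
    then show "(infdist (u^2) G)^2 = (infdist (u^2) (insert y G))^2"
      using infdist_low[OF fin ne gy, of "u^2"] b by simp
  qed
  also have "integral {t..s} (\<lambda>u. (infdist (u^2) (insert y G))^2)
       = integral {t..s} (\<lambda>u. (infdist (u^2) {y})^2)"
  proof (rule integral_spike[of "{t}"])
    show "negligible {t}" by simp
    fix u assume u: "u \<in> {t..s} - {t}"
    then have ut: "t < u" "u \<le> s" by auto
    have "b \<le> u^2"
    proof (cases "b \<le> 0")
      case True
      then show ?thesis using zero_le_power2[of u] by linarith
    next
      case False
      then have "t = min s (sqrt b)" using t by simp
      then have "t = sqrt b" using ut by auto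
      then have "sqrt b < u" using ut by simp
      then have "(sqrt b)^2 \<le> u^2" using False by (intro power_mono) auto
      then show ?thesis using False by simp
    qed
    then show "(infdist (u^2) {y})^2 = (infdist (u^2) (insert y G))^2"
      using infdist_high[OF fin ne gy, of "u^2"] b by simp
  qed
  finally show "FF (insert y G) s = FF G t + integral {t..s} (\<lambda>u. (infdist (u^2) {y})^2)" .
qed



definition numc :: "nat \<Rightarrow> real" where
  "numc k = (cseq k)^2 + cseq k * cseq (k - 1) + (cseq (k - 1))^2"

definition Xq :: "nat \<Rightarrow> nat \<Rightarrow> real" where
  "Xq n k = numc k / (3 * (cseq n)^2)"

definition opt :: "nat \<Rightarrow> real \<Rightarrow> real set" where
  "opt n s = (\<lambda>k. s^2 * Xq n k) ` {1..n}"

lemma numc_less: "numc k < numc (Suc k)"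
proof -
  have h: "0 \<le> cseq (k - 1)" "cseq (k - 1) \<le> cseq k" "cseq k < cseq (Suc k)" "0 \<le> cseq k"
    using cseq_nonneg cseq_mono_le cseq_less by auto
  have "(cseq (k - 1))^2 < (cseq (Suc k))^2" using h by (intro power_strict_mono) auto
  moreover have "cseq k * cseq (k - 1) \<le> cseq (Suc k) * cseq k"
    using mult_mono[of "cseq k" "cseq (Suc k)" "cseq (k - 1)" "cseq k"] h by simp
  ultimately show ?thesis unfolding numc_def by simp
qed

lemma numc_strict: "strict_mono numc"
  by (rule strict_monoI_Suc) (rule numc_less)

lemma Xq_less: "n \<ge> 1 \<Longrightarrow> k < l \<Longrightarrow> Xq n k < Xq n l"
  unfolding Xq_def using cseq_pos[of n] numc_strict
  by (intro divide_strict_right_mono) (auto simp: strict_mono_def)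

lemma sXq_less: "n \<ge> 1 \<Longrightarrow> 0 < s \<Longrightarrow> k < l \<Longrightarrow> s^2 * Xq n k < s^2 * Xq n l"
  using Xq_less by simp

lemma inj_opt: "n \<ge> 1 \<Longrightarrow> 0 < s \<Longrightarrow> inj_on (\<lambda>k. s^2 * Xq n k) A"
proof (rule inj_onI)
  fix k l assume n: "n \<ge> 1" and s: "0 < s" and e: "s^2 * Xq n k = s^2 * Xq n l"
  show "k = l"
  proof (rule ccontr)
    assume "k \<noteq> l"
    then have "k < l \<or> l < k" by arith
    then show False using sXq_less[OF n s, of k l] sXq_less[OF n s, of l k] e by auto
  qed
qed

lemma card_opt: "n \<ge> 1 \<Longrightarrow> 0 < s \<Longrightarrow> card (opt n s) = n"
  unfolding opt_def by (subst card_image) (auto intro: inj_opt)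

lemma Max_opt: "n \<ge> 1 \<Longrightarrow> 0 < s \<Longrightarrow> Max (opt n s) = s^2 * Xq n n"
  unfolding opt_def
proof (rule Max_eqI)
  assume n: "n \<ge> 1" and s: "0 < s"
  show "finite ((\<lambda>k. s^2 * Xq n k) ` {1..n})" by simp
  show "s^2 * Xq n n \<in> (\<lambda>k. s^2 * Xq n k) ` {1..n}" using n by auto
  fix y assume "y \<in> (\<lambda>k. s^2 * Xq n k) ` {1..n}"
  then obtain k where k: "k \<in> {1..n}" "y = s^2 * Xq n k" by auto
  show "y \<le> s^2 * Xq n n"
  proof (cases "k = n")
    case True then show ?thesis using k by simp
  next
    case False then have "k < n" using k by auto
    then show ?thesis using sXq_less[OF n s] k by (simp add: less_imp_le)
  qed
qed

lemma mid: "N \<ge> 1 \<Longrightarrow> k \<ge> 1 \<Longrightarrow> Xq N k + Xq N (Suc k) = 2 * (cseq k)^2 / (cseq N)^2"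
proof -
  assume N: "N \<ge> 1" and k: "k \<ge> 1"
  obtain j where j: "k = Suc j" using k by (cases k) auto
  have r: "numc k + numc (Suc k) = 6 * (cseq k)^2"
    unfolding numc_def j using cseq_rec[of j] by (simp add: algebra_simps)
  show ?thesis unfolding Xq_def using r cseq_pos[OF N]
    by (simp add: field_simps add_divide_distrib[symmetric])
qed

lemma opt_scale:
  assumes n: "n \<ge> 1" and k: "k \<le> n"
  shows "(cseq n / cseq (Suc n) * s)^2 * Xq n k = s^2 * Xq (Suc n) k"
  unfolding Xq_def using cseq_pos[OF n] cseq_pos[of "Suc n"]
  by (simp add: field_simps power2_eq_square)

lemma opt_Suc:
  assumes n: "n \<ge> 1"
  shows "opt (Suc n) s = insert (s^2 * Xq (Suc n) (Suc n)) (opt n (cseq n / cseq (Suc n) * s))"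
proof -
  have "{1..Suc n} = insert (Suc n) {1..n}" by auto
  then have "opt (Suc n) s = insert (s^2 * Xq (Suc n) (Suc n)) ((\<lambda>k. s^2 * Xq (Suc n) k) ` {1..n})"
    unfolding opt_def by simp
  also have "(\<lambda>k. s^2 * Xq (Suc n) k) ` {1..n} = opt n (cseq n / cseq (Suc n) * s)"
    unfolding opt_def using opt_scale[OF n] by (intro image_cong) auto
  finally show ?thesis .
qed

lemma Xq_top: "n \<ge> 1 \<Longrightarrow> s^2 * Xq (Suc n) (Suc n)
   = (s^2 + s * (cseq n / cseq (Suc n) * s) + (cseq n / cseq (Suc n) * s)^2) / 3"
  unfolding Xq_def numc_def using cseq_pos[of "Suc n"]
  by (simp add: field_simps power2_eq_square)



lemma FF_zero: "FF G 0 = 0" unfolding FF_def by simp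

lemma Wd_one: "Wd 1 = 4 / 45" unfolding Wd_def by simp

lemma Qf_zero: "Qf 0 s = 4 / 45 * s^5" unfolding Qf_def by (simp add: field_simps eval_nat_numeral)

lemma opt_one: "opt 1 s = {s^2 / 3}" unfolding opt_def Xq_def numc_def by simp

lemma base_case:
  assumes fin: "finite G" and ne: "G \<noteq> {}" and c: "card G \<le> 1" and s: "0 \<le> s"
  shows "Wd 1 * s^5 \<le> FF G s \<and> (0 < s \<longrightarrow> (FF G s = Wd 1 * s^5 \<longleftrightarrow> G = opt 1 s))"
proof -
  have "card G = 1" using fin ne c by (simp add: le_Suc_eq card_gt_0_iff)
  then obtain y where G: "G = {y}" by (auto simp: card_Suc_eq)
  have F: "FF G s = 4 / 45 * s^5 + s * (y - s^2 / 3)^2"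
    unfolding FF_def G using int_single[OF s, of y] Qf_zero by simp
  have nn: "0 \<le> s * (y - s^2 / 3)^2" using s by simp
  show ?thesis
  proof (intro conjI impI)
    show "Wd 1 * s^5 \<le> FF G s" unfolding Wd_one using F nn by simp
    assume sp: "0 < s"
    have "FF G s = Wd 1 * s^5 \<longleftrightarrow> s * (y - s^2 / 3)^2 = 0" unfolding Wd_one using F by simp
    also have "\<dots> \<longleftrightarrow> y = s^2 / 3" using sp by simp
    also have "\<dots> \<longleftrightarrow> G = opt 1 s" unfolding opt_one G by auto
    finally show "FF G s = Wd 1 * s^5 \<longleftrightarrow> G = opt 1 s" .
  qed
qed

lemma step_case:
  fixes n :: nat
  assumes n: "n \<ge> 1"
    and IH: "\<And>G s. finite G \<Longrightarrow> G \<noteq> {} \<Longrightarrow> card G \<le> n \<Longrightarrow> 0 \<le> s \<Longrightarrow>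
      Wd n * s^5 \<le> FF G s \<and> (0 < s \<longrightarrow> (FF G s = Wd n * s^5 \<longleftrightarrow> G = opt n s))"
    and fin: "finite G" and ne: "G \<noteq> {}" and c: "card G \<le> Suc n" and s0: "0 \<le> s"
  shows "Wd (Suc n) * s^5 \<le> FF G s \<and> (0 < s \<longrightarrow> (FF G s = Wd (Suc n) * s^5 \<longleftrightarrow> G = opt (Suc n) s))"
proof (cases "s = 0")
  case True
  then show ?thesis using FF_zero by simp
next
  case False
  then have s: "0 < s" using s0 by simp
  define \<sigma> where "\<sigma> = cseq n / cseq (Suc n)"
  have cn: "0 < cseq n" using cseq_pos[OF n] .
  have cn1: "cseq n < cseq (Suc n)" using cseq_less .
  have \<sigma>: "0 < \<sigma>" "\<sigma> < 1" unfolding \<sigma>_def using cn cn1 by auto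
  have \<sigma>s: "0 < \<sigma> * s" "\<sigma> * s < s" using \<sigma> s by auto
  have Wlt: "Wd (Suc n) * s^5 < Wd n * s^5"
  proof -
    have "s \<noteq> cseq n / cseq (Suc n) * s" using \<sigma>s unfolding \<sigma>_def by auto
    then have "Wd (Suc n) * s^5 < Wd n * s^5 + Qf s s" using Wd_step(2)[OF n _ _ s, of s] s by simp
    then show ?thesis by (simp add: Qf_def)
  qed
  show ?thesis
  proof (cases "card G \<le> n")
    case True
    have "Wd n * s^5 \<le> FF G s" using IH[OF fin ne True s0] by simp
    then have lt: "Wd (Suc n) * s^5 < FF G s" using Wlt by simp
    have "G \<noteq> opt (Suc n) s" using card_opt[of "Suc n" s] s True by auto
    then show ?thesis using lt by simp
  next
    case False
    then have cG: "card G = Suc n" using c by simp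
    define y where "y = Max G"
    define G' where "G' = G - {y}"
    have yG: "y \<in> G" unfolding y_def using fin ne by simp
    have finG': "finite G'" unfolding G'_def using fin by simp
    have cG': "card G' = n" unfolding G'_def using cG yG fin by simp
    have neG': "G' \<noteq> {}" using cG' n by auto
    have gy: "\<forall>w\<in>G'. w < y" unfolding G'_def y_def using fin by (auto simp: order.not_eq_order_implies_strict)
    have Gins: "G = insert y G'" unfolding G'_def using yG by auto
    define b where "b = (y + Max G') / 2"
    define t where "t = (if b \<le> 0 then 0 else min s (sqrt b))"
    note sp = FF_split[OF finG' neG' gy s0 b_def t_def]
    define m where "m = (s^2 + s * t + t^2) / 3"
    have t0: "0 \<le> t" and ts: "t \<le> s" using sp by auto
    have FG: "FF G s = FF G' t + Qf t s + (s - t) * (y - m)^2"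
      using sp(3) int_single[OF ts, of y] Gins unfolding m_def by simp
    have IHG': "Wd n * t^5 \<le> FF G' t \<and> (0 < t \<longrightarrow> (FF G' t = Wd n * t^5 \<longleftrightarrow> G' = opt n t))"
      using IH[OF finG' neG' _ t0] cG' by simp
    have W1: "Wd (Suc n) * s^5 \<le> Wd n * t^5 + Qf t s" using Wd_step(1)[OF n t0 ts s] .
    have nn: "0 \<le> (s - t) * (y - m)^2" using ts by simp
    have ineq: "Wd (Suc n) * s^5 \<le> FF G s" using FG IHG' W1 nn by linarith
    have eq: "FF G s = Wd (Suc n) * s^5 \<longleftrightarrow> G = opt (Suc n) s"
    proof
      assume e: "FF G s = Wd (Suc n) * s^5"
      have e1: "FF G' t = Wd n * t^5" and e2: "(s - t) * (y - m)^2 = 0"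
        and e3: "Wd (Suc n) * s^5 = Wd n * t^5 + Qf t s"
        using e FG IHG' W1 nn by linarith+
      have tq: "t = \<sigma> * s"
      proof (rule ccontr)
        assume "t \<noteq> \<sigma> * s"
        then have "Wd (Suc n) * s^5 < Wd n * t^5 + Qf t s"
          using Wd_step(2)[OF n t0 ts s] unfolding \<sigma>_def by simp
        then show False using e3 by simp
      qed
      then have tp: "0 < t" "t < s" using \<sigma>s by auto
      have ym: "y = m" using e2 tp by simp
      have G'eq: "G' = opt n t" using IHG' e1 tp by simp
      have "y = s^2 * Xq (Suc n) (Suc n)" unfolding ym m_def tq \<sigma>_def using Xq_top[OF n, of s] by simp
      then show "G = opt (Suc n) s" unfolding Gins G'eq opt_Suc[OF n, of s] tq \<sigma>_def by simp
    next
      assume Go: "G = opt (Suc n) s"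
      have yv: "y = s^2 * Xq (Suc n) (Suc n)" unfolding y_def Go using Max_opt[of "Suc n" s] s by simp
      have Go2: "G = insert y (opt n (\<sigma> * s))" using Go opt_Suc[OF n, of s] yv unfolding \<sigma>_def by simp
      have ynot: "y \<notin> opt n (\<sigma> * s)"
      proof
        assume "y \<in> opt n (\<sigma> * s)"
        then obtain k where k: "k \<in> {1..n}" "y = (\<sigma> * s)^2 * Xq n k" unfolding opt_def by auto
        then have "y = s^2 * Xq (Suc n) k" using opt_scale[OF n, of k s] unfolding \<sigma>_def by simp
        moreover have "s^2 * Xq (Suc n) k < s^2 * Xq (Suc n) (Suc n)" using k s by (intro sXq_less) auto
        ultimately show False using yv s by auto
      qed
      have G'eq: "G' = opt n (\<sigma> * s)" unfolding G'_def Go2 using ynot by auto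
      have MG': "Max G' = s^2 * Xq (Suc n) n"
        unfolding G'eq using Max_opt[OF n \<sigma>s(1)] opt_scale[OF n, of n s] unfolding \<sigma>_def by simp
      have "b = s^2 * ((cseq n)^2 / (cseq (Suc n))^2)"
      proof -
        have h: "Xq (Suc n) n + Xq (Suc n) (Suc n) = 2 * ((cseq n)^2 / (cseq (Suc n))^2)"
          using mid[of "Suc n" n] n by simp
        have "b = s^2 * (Xq (Suc n) n + Xq (Suc n) (Suc n)) / 2" unfolding b_def MG' yv by (simp add: algebra_simps)
        then show ?thesis unfolding h by simp
      qed
      then have bv: "b = (\<sigma> * s)^2" unfolding \<sigma>_def by (simp add: power_divide power_mult_distrib)
      have tv: "t = \<sigma> * s"
      proof -
        have "\<not> b \<le> 0" using bv \<sigma>s \<sigma> by simp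
        moreover have "sqrt b = \<sigma> * s" using bv \<sigma>s by simp
        ultimately show ?thesis unfolding t_def using \<sigma>s by simp
      qed
      have e1: "FF G' t = Wd n * t^5" using IHG' G'eq tv \<sigma>s by simp
      have ym: "y = m" unfolding yv m_def tv \<sigma>_def using Xq_top[OF n, of s] by simp
      have e3: "Wd (Suc n) * s^5 = Wd n * t^5 + Qf t s" using Wd_step(3)[OF n t0 ts s] tv unfolding \<sigma>_def by simp
      show "FF G s = Wd (Suc n) * s^5" using FG e1 ym e3 by simp
    qed
    show ?thesis using ineq eq by simp
  qed
qed

lemma main_ineq:
  "finite G \<Longrightarrow> G \<noteq> {} \<Longrightarrow> card G \<le> Suc m \<Longrightarrow> 0 \<le> s \<Longrightarrow>
    Wd (Suc m) * s^5 \<le> FF G s \<and> (0 < s \<longrightarrow> (FF G s = Wd (Suc m) * s^5 \<longleftrightarrow> G = opt (Suc m) s))"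
proof (induction m arbitrary: G s)
  case 0
  then show ?case using base_case[of G s] by simp
next
  case (Suc m)
  show ?case by (rule step_case[OF _ Suc.IH Suc.prems]) auto
qed



lemma meas_g[measurable]: "(\<lambda>x::real. (infdist x G)^2) \<in> borel_measurable borel"
  by (intro borel_measurable_continuous_onI continuous_intros)

lemma distortion_FF:
  assumes fin: "finite G" and ne: "G \<noteq> {}"
  shows "distortion G = ennreal (FF G 1)"
proof -
  define g where "g x = (infdist x G)^2" for x :: real
  have gm[measurable]: "g \<in> borel_measurable borel" unfolding g_def by simp
  have g0: "0 \<le> g x" for x unfolding g_def by simp
  define f where "f x = g x / (2 * sqrt x)" for x :: real
  have fm[measurable]: "f \<in> borel_measurable borel" unfolding f_def by measurable
  have "distortion G = (\<integral>\<^sup>+ x. ennreal (indicator {0<..<1} x / (2 * sqrt x)) * ennreal (g x) \<partial>lborel)"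
    unfolding distortion_def qmu_def g_def
    by (subst nn_integral_density) (auto simp: g_def[symmetric])
  also have "\<dots> = (\<integral>\<^sup>+ x. ennreal (f x * indicator {0..1} x) \<partial>lborel)"
  proof (rule nn_integral_cong_AE)
    show "AE x in lborel. ennreal (indicator {0<..<1} x / (2 * sqrt x)) * ennreal (g x) = ennreal (f x * indicator {0..1} x)"
      using AE_lborel_singleton[of 1]
    proof eventually_elim
      case (elim x)
      have "ennreal (indicator {0<..<1} x / (2 * sqrt x)) * ennreal (g x)
          = ennreal (indicator {0<..<1} x / (2 * sqrt x) * g x)"
        by (rule ennreal_mult''[symmetric]) (simp add: g0)
      also have "indicator {0<..<1} x / (2 * sqrt x) * g x = f x * indicator {0..1} x"
        using elim unfolding f_def by (cases "x = 0") (auto simp: indicator_def)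
      finally show ?case .
    qed
  qed
  also have "\<dots> = (\<integral>\<^sup>+ x. ennreal (f (x^2) * (2 * x) * indicator {0..1} x) \<partial>lborel)"
  proof -
    have "(\<integral>\<^sup>+ x. ennreal (f x * indicator {(0::real)^2..1^2} x) \<partial>lborel)
        = (\<integral>\<^sup>+ x. ennreal (f (x^2) * (2 * x) * indicator {0..1} x) \<partial>lborel)"
      by (rule nn_integral_substitution[where g="\<lambda>x. x^2" and g'="\<lambda>x. 2 * x" and a=0 and b=1])
        (auto intro!: derivative_eq_intros continuous_intros simp: set_borel_measurable_def)
    then show ?thesis by simp
  qed
  also have "\<dots> = (\<integral>\<^sup>+ x. ennreal (indicator {0..1} x * g (x^2)) \<partial>lborel)"
  proof (rule nn_integral_cong_AE)
    show "AE x in lborel. ennreal (f (x^2) * (2 * x) * indicator {0..1} x) = ennreal (indicator {0..1} x * g (x^2))"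
      using AE_lborel_singleton[of 0]
    proof eventually_elim
      case (elim x)
      show ?case
      proof (cases "x \<in> {0..1}")
        case True
        then have "0 < x" using elim by auto
        then show ?thesis using True unfolding f_def by (simp add: field_simps)
      next
        case False
        then show ?thesis by simp
      qed
    qed
  qed
  also have "\<dots> = ennreal (FF G 1)"
  proof (rule nn_integral_has_integral_lborel)
    show "(\<lambda>x. indicator {0..1} x * g (x^2)) \<in> borel_measurable borel" by measurable
    show "0 \<le> indicator {0..1} x * g (x^2)" for x by (simp add: g0)
    have "((\<lambda>u. (infdist (u^2) G)^2) has_integral FF G 1) {0..1}"
      unfolding FF_def by (rule integrable_integral[OF integrable_fd])
    then have "((\<lambda>x. if x \<in> {0..1} then g (x^2) else 0) has_integral FF G 1) UNIV"
      unfolding has_integral_restrict_UNIV g_def .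
    then show "((\<lambda>x. indicator {0..1} x * g (x^2)) has_integral FF G 1) UNIV"
      by (rule has_integral_eq[rotated]) (simp add: indicator_def)
  qed
  finally show ?thesis .
qed



lemma FF_nonneg: "0 \<le> FF G s"
  unfolding FF_def by (rule integral_nonneg[OF integrable_fd]) simp

theorem mainTheorem13:
  fixes N :: nat and x :: "nat \<Rightarrow> real"
  assumes "N \<ge> 1"
    and "\<And>k. x k = ((cseq k)\<^sup>2 + cseq k * cseq (k - 1) + (cseq (k - 1))\<^sup>2) / (3 * (cseq N)\<^sup>2)"
  shows "optimal_quantizer N (x ` {1..N})
    \<and> (\<forall>\<Gamma>. optimal_quantizer N \<Gamma> \<longrightarrow> \<Gamma> = x ` {1..N})
    \<and> strict_mono_on {1..N} x
    \<and> (\<forall>k\<in>{1..<N}. (x k + x (k + 1)) / 2 = (cseq k / cseq N)\<^sup>2)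
    \<and> (cseq 0 / cseq N)\<^sup>2 = 0 \<and> (cseq N / cseq N)\<^sup>2 = 1"
proof -
  have N: "N \<ge> 1" using assms(1) .
  obtain m where m: "N = Suc m" using N by (cases N) auto
  have xq: "x k = Xq N k" for k unfolding assms(2) Xq_def numc_def ..
  have xo: "x ` {1..N} = opt N 1" unfolding opt_def xq by simp
  have fo: "finite (opt N 1)" unfolding opt_def by simp
  have neo: "opt N 1 \<noteq> {}" unfolding opt_def using N by auto
  have co: "card (opt N 1) \<le> N" using card_opt[OF N, of 1] by simp
  have go: "grid N (opt N 1)" unfolding grid_def using fo neo co by simp
  have Fo: "FF (opt N 1) 1 = Wd N" using main_ineq[of "opt N 1" m 1] fo neo co m by simp
  have Wpos: "0 \<le> Wd N" using Fo FF_nonneg[of "opt N 1" 1] by simp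
  have lower: "Wd N \<le> FF G 1" if "grid N G" for G
    using main_ineq[of G m 1] that m unfolding grid_def by simp
  have opt1: "optimal_quantizer N (opt N 1)"
    unfolding optimal_quantizer_def
  proof (intro conjI allI impI go)
    fix G assume g: "grid N G"
    have "distortion (opt N 1) = ennreal (Wd N)" using distortion_FF[OF fo neo] Fo by simp
    also have "\<dots> \<le> ennreal (FF G 1)" using lower[OF g] by (rule ennreal_leI)
    also have "\<dots> = distortion G" using distortion_FF g unfolding grid_def by simp
    finally show "distortion (opt N 1) \<le> distortion G" .
  qed
  have uniq: "G = opt N 1" if oq: "optimal_quantizer N G" for G
  proof -
    have g: "grid N G" using oq unfolding optimal_quantizer_def by simp
    have "distortion G \<le> distortion (opt N 1)" using oq go unfolding optimal_quantizer_def by simp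
    then have "ennreal (FF G 1) \<le> ennreal (Wd N)"
      using distortion_FF[OF fo neo] Fo distortion_FF[of G] g unfolding grid_def by simp
    then have "FF G 1 \<le> Wd N" using Wpos by (simp add: ennreal_le_iff)
    then have "FF G 1 = Wd N" using lower[OF g] by simp
    then show ?thesis using main_ineq[of G m 1] g m unfolding grid_def by simp
  qed
  have sm: "strict_mono_on {1..N} x"
    unfolding strict_mono_on_def xq by (auto intro: Xq_less[OF N])
  have midp: "\<forall>k\<in>{1..<N}. (x k + x (k + 1)) / 2 = (cseq k / cseq N)\<^sup>2"
  proof
    fix k assume "k \<in> {1..<N}"
    then have k: "k \<ge> 1" by simp
    show "(x k + x (k + 1)) / 2 = (cseq k / cseq N)\<^sup>2"
    proof -
      have "(Xq N k + Xq N (Suc k)) / 2 = (cseq k)^2 / (cseq N)^2" using mid[OF N k] by simp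
      then show ?thesis unfolding xq power_divide by simp
    qed
  qed
  have cN: "0 < cseq N" using cseq_pos[OF N] .
  show ?thesis unfolding xo
  proof (intro conjI allI impI)
    show "optimal_quantizer N (opt N 1)" by (rule opt1)
    show "G = opt N 1" if "optimal_quantizer N G" for G using uniq[OF that] .
    show "strict_mono_on {1..N} x" by (rule sm)
    show "\<forall>k\<in>{1..<N}. (x k + x (k + 1)) / 2 = (cseq k / cseq N)\<^sup>2" by (rule midp)
    show "(cseq 0 / cseq N)\<^sup>2 = 0" by simp
    show "(cseq N / cseq N)\<^sup>2 = 1" using cN by simp
  qed
qed


end
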